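(* Fix real numbers $S_1>0$ and $t>0$. For $S_2\ge 0$ define $$R_{DF}(S_2)=\frac12\max_{0\le\rho\le1}\min\Big\{C(tS_1)+C\big((1-\rho^2)S_1\big),\;C(S_1)+C\big(S_1+S_2+2\rho\sqrt{S_1S_2}\big)\Big\},$$ $$R_{CF}(S_2)=\frac12C(S_1)+\frac12C\Big(S_1+\frac{tS_1S_2}{1+(t+1)S_1+S_2}\Big),$$ where $C(x)=\log_2(1+x)$. Then both $R_{DF}$ and $R_{CF}$ are concave functions of $S_2$ on $[0,\infty)$.
   Context: These are the Decode-and-Forward (DF) and Compress-and-Forward (CF) achievable rates of a half-duplex Gaussian relay channel in one fading block, where $S_1=|h_{31}|^2P_1$ is the source–destination SNR, $t=|h_{21}|^2/|h_{31}|^2$ is the ratio of source–relay to source–destination channel power gains, and $S_2=2|h_{32}|^2P_2$ is the relay–destination SNR with relay power $P_2$. *)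

theory Defs
  imports "HOL-Analysis.Analysis"
begin

definition Cap :: "real \<Rightarrow> real" where
  "Cap x = log 2 (1 + x)"

text \<open>Decode-and-forward rate; the maximum over rho in [0,1] is written as a supremum
  (it is attained, the objective being continuous on a compact interval).\<close>
definition R_DF :: "real \<Rightarrow> real \<Rightarrow> real \<Rightarrow> real" where
  "R_DF S1 t S2 = (1/2) * (SUP \<rho>\<in>{0..1::real}.
      min (Cap (t * S1) + Cap ((1 - \<rho>\<^sup>2) * S1))
          (Cap S1 + Cap (S1 + S2 + 2 * \<rho> * sqrt (S1 * S2))))"

definition R_CF :: "real \<Rightarrow> real \<Rightarrow> real \<Rightarrow> real" where
  "R_CF S1 t S2 = (1/2) * Cap S1
      + (1/2) * Cap (S1 + t * S1 * S2 / (1 + (t + 1) * S1 + S2))"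

end

theory Submission
  imports Defs
begin

lemma cap_mono: "-1 < a \<Longrightarrow> a \<le> b \<Longrightarrow> Cap a \<le> Cap b"
  unfolding Cap_def by simp

lemma cap_conc:
  assumes "-1 < a" "-1 < b" "0 \<le> u" "0 \<le> v" "u + v = 1"
  shows "u * Cap a + v * Cap b \<le> Cap (u * a + v * b)"
proof -
  have c: "concave_on {0<..} (\<lambda>x. log 2 x)" by (rule log_concave) auto
  have "u * log 2 (1 + a) + v * log 2 (1 + b) \<le> log 2 (u * (1 + a) + v * (1 + b))"
    using c assms unfolding concave_on_iff by auto
  moreover have "u * (1 + a) + v * (1 + b) = 1 + (u * a + v * b)"
    using assms(5) by (simp add: algebra_simps)
  ultimately show ?thesis unfolding Cap_def by simp
qed

lemma sup_comb:
  fixes f g :: "real \<Rightarrow> real"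
  assumes "A \<noteq> {}" "B \<noteq> {}" "bdd_above (f ` A)" "bdd_above (g ` B)"
    "0 \<le> u" "0 \<le> v" "u + v = 1"
    "\<And>a b. a \<in> A \<Longrightarrow> b \<in> B \<Longrightarrow> u * f a + v * g b \<le> c"
  shows "u * (SUP a\<in>A. f a) + v * (SUP b\<in>B. g b) \<le> c"
proof (cases "u = 0")
  case True
  then have v: "v = 1" using assms by simp
  obtain a where a: "a \<in> A" using assms(1) by auto
  have "(SUP b\<in>B. g b) \<le> c"
    by (rule cSUP_least) (use assms(2) assms(8)[OF a] True v in auto)
  then show ?thesis using True v by simp
next
  case False
  then have u: "u > 0" using assms by simp
  have h: "\<And>b. b \<in> B \<Longrightarrow> (SUP a\<in>A. f a) \<le> (c - v * g b) / u"
  proof -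
    fix b assume b: "b \<in> B"
    show "(SUP a\<in>A. f a) \<le> (c - v * g b) / u"
    proof (rule cSUP_least)
      show "A \<noteq> {}" by fact
      fix a assume "a \<in> A"
      then have "u * f a + v * g b \<le> c" using assms(8) b by auto
      then show "f a \<le> (c - v * g b) / u" using u by (simp add: field_simps)
    qed
  qed
  show ?thesis
  proof (cases "v = 0")
    case True
    then have "u = 1" using assms by simp
    obtain b where b: "b \<in> B" using assms(2) by auto
    show ?thesis using h[OF b] True \<open>u = 1\<close> by simp
  next
    case False
    then have v: "v > 0" using assms by simp
    have "(SUP b\<in>B. g b) \<le> (c - u * (SUP a\<in>A. f a)) / v"
    proof (rule cSUP_least)
      show "B \<noteq> {}" by fact
      fix b assume b: "b \<in> B"
      have "u * (SUP a\<in>A. f a) \<le> c - v * g b" using h[OF b] u by (simp add: field_simps)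
      then show "g b \<le> (c - u * (SUP a\<in>A. f a)) / v" using v by (simp add: field_simps)
    qed
    then show ?thesis using v by (simp add: field_simps)
  qed
qed

lemma cs_ineq:
  fixes u v a b c d :: real
  assumes "0 \<le> u" "0 \<le> v"
  shows "(u * a * b + v * c * d)^2 \<le> (u * a^2 + v * c^2) * (u * b^2 + v * d^2)"
proof -
  have "(u * a^2 + v * c^2) * (u * b^2 + v * d^2) - (u * a * b + v * c * d)^2 = u * v * (a * d - c * b)^2"
    by (simp add: algebra_simps power2_eq_square)
  moreover have "u * v * (a * d - c * b)^2 \<ge> 0" using assms by simp
  ultimately show ?thesis by linarith
qed

lemma DF_core:
  fixes S1 t x y u v r1 r2 :: real
  assumes S1: "S1 > 0" and t: "t > 0" and x: "x \<ge> 0" and y: "y \<ge> 0"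
    and u: "u \<ge> 0" and v: "v \<ge> 0" and uv: "u + v = 1"
    and r1: "0 \<le> r1" "r1 \<le> 1" and r2: "0 \<le> r2" "r2 \<le> 1"
  defines "F \<equiv> (\<lambda>S2 \<rho>::real. min (Cap (t * S1) + Cap ((1 - \<rho>\<^sup>2) * S1))
          (Cap S1 + Cap (S1 + S2 + 2 * \<rho> * sqrt (S1 * S2))))"
  shows "\<exists>\<rho>\<in>{0..1}. u * F x r1 + v * F y r2 \<le> F (u * x + v * y) \<rho>"
proof -
  have veq: "v = 1 - u" using uv by simp
  define z where "z = u * x + v * y"
  define w where "w = u * r1 * sqrt x + v * r2 * sqrt y"
  define \<rho> where "\<rho> = (if z = 0 then 0 else w / sqrt z)"
  have z0: "z \<ge> 0" using u v x y by (simp add: z_def)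
  have w0: "w \<ge> 0" using u v x y r1 r2 by (simp add: w_def)
  have cs: "w^2 \<le> (u * r1^2 + v * r2^2) * z"
    using cs_ineq[OF u v, of r1 "sqrt x" r2 "sqrt y"] x y by (simp add: w_def z_def)
  have rz: "\<rho> * sqrt z = w"
  proof (cases "z = 0")
    case True
    then have "u * x = 0" "v * y = 0" using u v x y z_def
      by (smt (verit) mult_nonneg_nonneg)+
    then have "u * sqrt x = 0" "v * sqrt y = 0" by auto
    then have "w = 0" unfolding w_def
      by (metis mult.assoc mult.commute add.right_neutral mult_zero_left)
    then show ?thesis using True by (simp add: \<rho>_def)
  next
    case False
    then show ?thesis using z0 by (simp add: \<rho>_def)
  qed
  have rsq: "\<rho>^2 \<le> u * r1^2 + v * r2^2"
  proof (cases "z = 0")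
    case True
    then show ?thesis using u v by (simp add: \<rho>_def)
  next
    case False
    then have zp: "z > 0" using z0 by simp
    have "\<rho>^2 = w^2 / z" using False z0 by (simp add: \<rho>_def power_divide)
    also have "\<dots> \<le> u * r1^2 + v * r2^2" using cs zp by (simp add: divide_le_eq)
    finally show ?thesis .
  qed
  have r0: "\<rho> \<ge> 0" using w0 z0 by (simp add: \<rho>_def)
  have "u * r1^2 + v * r2^2 \<le> u * 1 + v * 1"
    using u v r1 r2 by (intro add_mono mult_left_mono) (auto simp: power_le_one)
  then have "\<rho>^2 \<le> 1" using rsq uv by simp
  then have r1': "\<rho> \<le> 1" using r0 by (simp add: power_le_one_iff abs_le_iff power2_le_iff_abs_le)
  have A1: "u * Cap ((1 - r1\<^sup>2) * S1) + v * Cap ((1 - r2\<^sup>2) * S1) \<le> Cap ((1 - \<rho>\<^sup>2) * S1)"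
  proof -
    have a: "(1 - r1\<^sup>2) * S1 \<ge> 0" "(1 - r2\<^sup>2) * S1 \<ge> 0" using r1 r2 S1
      by (auto simp: power_le_one)
    have "u * Cap ((1 - r1\<^sup>2) * S1) + v * Cap ((1 - r2\<^sup>2) * S1)
        \<le> Cap (u * ((1 - r1\<^sup>2) * S1) + v * ((1 - r2\<^sup>2) * S1))"
      by (rule cap_conc) (use a u v uv in auto)
    also have "\<dots> \<le> Cap ((1 - \<rho>\<^sup>2) * S1)"
    proof (rule cap_mono)
      show "-1 < u * ((1 - r1\<^sup>2) * S1) + v * ((1 - r2\<^sup>2) * S1)"
        using a u v by (smt (verit) mult_nonneg_nonneg)
      have "u * ((1 - r1\<^sup>2) * S1) + v * ((1 - r2\<^sup>2) * S1) = (1 - (u * r1^2 + v * r2^2)) * S1"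
        by (simp add: veq algebra_simps)
      also have "\<dots> \<le> (1 - \<rho>\<^sup>2) * S1" using rsq S1 by (intro mult_right_mono) auto
      finally show "u * ((1 - r1\<^sup>2) * S1) + v * ((1 - r2\<^sup>2) * S1) \<le> (1 - \<rho>\<^sup>2) * S1" .
    qed
    finally show ?thesis .
  qed
  have A: "u * (Cap (t * S1) + Cap ((1 - r1\<^sup>2) * S1)) + v * (Cap (t * S1) + Cap ((1 - r2\<^sup>2) * S1))
      \<le> Cap (t * S1) + Cap ((1 - \<rho>\<^sup>2) * S1)"
  proof -
    have "u * Cap (t * S1) + v * Cap (t * S1) = Cap (t * S1)" by (simp add: veq algebra_simps)
    then show ?thesis using A1 by (simp add: algebra_simps)
  qed
  have sq: "\<And>q r. 0 \<le> q \<Longrightarrow> r * sqrt (S1 * q) = sqrt S1 * (r * sqrt q)"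
    by (simp add: real_sqrt_mult)
  have B1: "u * Cap (S1 + x + 2 * r1 * sqrt (S1 * x)) + v * Cap (S1 + y + 2 * r2 * sqrt (S1 * y))
      \<le> Cap (S1 + z + 2 * \<rho> * sqrt (S1 * z))"
  proof -
    have a: "S1 + x + 2 * r1 * sqrt (S1 * x) \<ge> 0" "S1 + y + 2 * r2 * sqrt (S1 * y) \<ge> 0"
      using S1 x y r1 r2 by auto
    have "u * Cap (S1 + x + 2 * r1 * sqrt (S1 * x)) + v * Cap (S1 + y + 2 * r2 * sqrt (S1 * y))
      \<le> Cap (u * (S1 + x + 2 * r1 * sqrt (S1 * x)) + v * (S1 + y + 2 * r2 * sqrt (S1 * y)))"
      by (rule cap_conc) (use a u v uv in auto)
    also have "u * (S1 + x + 2 * r1 * sqrt (S1 * x)) + v * (S1 + y + 2 * r2 * sqrt (S1 * y))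
        = S1 + z + 2 * \<rho> * sqrt (S1 * z)"
    proof -
      have "2 * \<rho> * sqrt (S1 * z) = 2 * sqrt S1 * w"
        using sq[OF z0, of \<rho>] rz by simp
      moreover have "2 * r1 * sqrt (S1 * x) = 2 * sqrt S1 * (r1 * sqrt x)"
        using sq[OF x, of r1] by simp
      moreover have "2 * r2 * sqrt (S1 * y) = 2 * sqrt S1 * (r2 * sqrt y)"
        using sq[OF y, of r2] by simp
      ultimately have "u * (2 * r1 * sqrt (S1 * x)) + v * (2 * r2 * sqrt (S1 * y)) = 2 * \<rho> * sqrt (S1 * z)"
        by (simp add: w_def algebra_simps real_sqrt_mult)
      moreover have "u * (S1 + x + 2 * r1 * sqrt (S1 * x)) + v * (S1 + y + 2 * r2 * sqrt (S1 * y))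
        = (u + v) * S1 + z + (u * (2 * r1 * sqrt (S1 * x)) + v * (2 * r2 * sqrt (S1 * y)))"
        unfolding z_def by (simp only: distrib_left distrib_right add_ac)
      ultimately show ?thesis using uv by simp
    qed
    finally show ?thesis .
  qed
  have B: "u * (Cap S1 + Cap (S1 + x + 2 * r1 * sqrt (S1 * x))) + v * (Cap S1 + Cap (S1 + y + 2 * r2 * sqrt (S1 * y)))
      \<le> Cap S1 + Cap (S1 + z + 2 * \<rho> * sqrt (S1 * z))"
  proof -
    have "u * Cap S1 + v * Cap S1 = Cap S1" by (simp add: veq algebra_simps)
    then show ?thesis using B1 by (simp add: algebra_simps)
  qed
  have "u * F x r1 + v * F y r2 \<le> F z \<rho>"
  proof -
    let ?A1 = "Cap (t * S1) + Cap ((1 - r1\<^sup>2) * S1)"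
    let ?A2 = "Cap (t * S1) + Cap ((1 - r2\<^sup>2) * S1)"
    let ?B1 = "Cap S1 + Cap (S1 + x + 2 * r1 * sqrt (S1 * x))"
    let ?B2 = "Cap S1 + Cap (S1 + y + 2 * r2 * sqrt (S1 * y))"
    have "u * min ?A1 ?B1 + v * min ?A2 ?B2 \<le> u * ?A1 + v * ?A2"
      using u v by (intro add_mono mult_left_mono) auto
    moreover have "u * min ?A1 ?B1 + v * min ?A2 ?B2 \<le> u * ?B1 + v * ?B2"
      using u v by (intro add_mono mult_left_mono) auto
    ultimately show ?thesis using A B unfolding F_def by simp
  qed
  then show ?thesis using r0 r1' unfolding z_def by auto
qed

lemma inv_conv:
  fixes p q u v :: real
  assumes p: "p > 0" and q: "q > 0" and u: "u \<ge> 0" and v: "v \<ge> 0" and uv: "u + v = 1"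
  shows "1 / (u * p + v * q) \<le> u / p + v / q"
proof -
  have veq: "v = 1 - u" using uv by simp
  have d: "u * p + v * q > 0" using p q u v uv
    by (smt (verit) mult_nonneg_nonneg mult_pos_pos)
  have "(u * q + v * p) * (u * p + v * q) - p * q = u * v * (p - q)^2"
    by (simp add: veq algebra_simps power2_eq_square)
  moreover have "u * v * (p - q)^2 \<ge> 0" using u v by simp
  ultimately have "p * q \<le> (u * q + v * p) * (u * p + v * q)" by linarith
  then have "1 / (u * p + v * q) \<le> (u * q + v * p) / (p * q)"
    using d p q by (simp add: divide_simps mult.commute)
  also have "\<dots> = u / p + v / q" using p q by (simp add: field_simps)
  finally show ?thesis .
qed

lemma CF_core:
  fixes S1 t x y u v :: real
  assumes S1: "S1 > 0" and t: "t > 0" and x: "x \<ge> 0" and y: "y \<ge> 0"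
    and u: "u \<ge> 0" and v: "v \<ge> 0" and uv: "u + v = 1"
  shows "u * R_CF S1 t x + v * R_CF S1 t y \<le> R_CF S1 t (u * x + v * y)"
proof -
  have veq: "v = 1 - u" using uv by simp
  define a where "a = 1 + (t + 1) * S1"
  have a: "a > 0" using S1 t by (simp add: a_def add_pos_nonneg)
  define g where "g = (\<lambda>s. S1 + t * S1 * s / (1 + (t + 1) * S1 + s))"
  have gs: "\<And>s. s \<ge> 0 \<Longrightarrow> g s = S1 + t * S1 - t * S1 * a * (1 / (a + s))"
  proof -
    fix s :: real assume "s \<ge> 0"
    then have "a + s > 0" using a by simp
    then show "g s = S1 + t * S1 - t * S1 * a * (1 / (a + s))"
      unfolding g_def a_def[symmetric] by (simp add: field_simps)
  qed
  have g0: "\<And>s. s \<ge> 0 \<Longrightarrow> g s \<ge> 0" using S1 t unfolding g_def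
    by (intro add_nonneg_nonneg divide_nonneg_nonneg) auto
  define z where "z = u * x + v * y"
  have z0: "z \<ge> 0" using u v x y by (simp add: z_def)
  have ic: "1 / (a + z) \<le> u / (a + x) + v / (a + y)"
  proof -
    have "a + z = u * (a + x) + v * (a + y)" by (simp add: z_def veq algebra_simps)
    then show ?thesis using inv_conv[of "a + x" "a + y" u v] a x y u v uv by simp
  qed
  have gz: "u * g x + v * g y \<le> g z"
  proof -
    define P where "P = 1 / (a + x)"
    define Q where "Q = 1 / (a + y)"
    have h1: "u * g x + v * g y = S1 + t * S1 - t * S1 * a * (u * P + v * Q)"
      unfolding gs[OF x] gs[OF y] P_def[symmetric] Q_def[symmetric] by (simp add: veq algebra_simps)
    have h2: "u * P + v * Q = u / (a + x) + v / (a + y)" by (simp add: P_def Q_def)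
    have "u * g x + v * g y = S1 + t * S1 - t * S1 * a * (u / (a + x) + v / (a + y))"
      using h1 unfolding h2 .
    also have "\<dots> \<le> S1 + t * S1 - t * S1 * a * (1 / (a + z))"
      using ic S1 t a by (intro diff_left_mono mult_left_mono) auto
    also have "\<dots> = g z" using gs[OF z0] by simp
    finally show ?thesis .
  qed
  have gx: "g x \<ge> 0" using g0 x by blast
  have gy: "g y \<ge> 0" using g0 y by blast
  have "u * Cap (g x) + v * Cap (g y) \<le> Cap (u * g x + v * g y)"
    by (rule cap_conc) (use gx gy u v uv in linarith)+
  also have "\<dots> \<le> Cap (g z)"
  proof (rule cap_mono[OF _ gz])
    have "u * g x \<ge> 0" "v * g y \<ge> 0" using gx gy u v by simp_all
    then show "-1 < u * g x + v * g y" by linarith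
  qed
  finally have "u * Cap (g x) + v * Cap (g y) \<le> Cap (g z)" .
  moreover have Rg: "\<And>s. R_CF S1 t s = (1/2) * Cap S1 + (1/2) * Cap (g s)"
    by (simp add: R_CF_def g_def)
  moreover have "u * R_CF S1 t x + v * R_CF S1 t y
      = (u + v) * ((1/2) * Cap S1) + (1/2) * (u * Cap (g x) + v * Cap (g y))"
    unfolding Rg by (simp add: algebra_simps)
  ultimately show ?thesis unfolding z_def[symmetric] using uv by simp
qed

theorem theorem1:
  fixes S1 t :: real
  assumes "S1 > 0" and "t > 0"
  shows "concave_on {0..} (R_DF S1 t) \<and> concave_on {0..} (R_CF S1 t)"
proof
  show "concave_on {0..} (R_CF S1 t)"
    unfolding concave_on_iff using CF_core[OF assms] by (auto simp: convex_real_interval)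
next
  define F where "F \<equiv> (\<lambda>S2 \<rho>::real. min (Cap (t * S1) + Cap ((1 - \<rho>\<^sup>2) * S1))
          (Cap S1 + Cap (S1 + S2 + 2 * \<rho> * sqrt (S1 * S2))))"
  have R: "\<And>S2. R_DF S1 t S2 = 1/2 * (SUP \<rho>\<in>{0..1}. F S2 \<rho>)"
    by (simp add: R_DF_def F_def)
  have bdd: "\<And>S2. bdd_above (F S2 ` {0..1})"
  proof -
    fix S2
    show "bdd_above (F S2 ` {0..1})"
    proof (rule bdd_aboveI2)
      fix \<rho> :: real assume "\<rho> \<in> {0..1}"
      then have "(1 - \<rho>\<^sup>2) * S1 \<le> S1" "(1 - \<rho>\<^sup>2) * S1 \<ge> 0" using assms
        by (auto simp: power_le_one)
      then have "Cap ((1 - \<rho>\<^sup>2) * S1) \<le> Cap S1" by (intro cap_mono) auto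
      then show "F S2 \<rho> \<le> Cap (t * S1) + Cap S1" unfolding F_def by simp
    qed
  qed
  show "concave_on {0..} (R_DF S1 t)"
    unfolding concave_on_iff
  proof (intro conjI ballI allI impI)
    show "convex {0::real..}" by (simp add: convex_real_interval)
    fix x y u v :: real
    assume xy: "x \<in> {0..}" "y \<in> {0..}" and uv: "0 \<le> u" "0 \<le> v" "u + v = 1"
    have "u * (SUP \<rho>\<in>{0..1}. F x \<rho>) + v * (SUP \<rho>\<in>{0..1}. F y \<rho>) \<le> (SUP \<rho>\<in>{0..1}. F (u * x + v * y) \<rho>)"
    proof (rule sup_comb[OF _ _ bdd bdd uv])
      fix a b :: real assume ab: "a \<in> {0..1}" "b \<in> {0..1}"
      obtain \<rho> where r: "\<rho> \<in> {0..1}" "u * F x a + v * F y b \<le> F (u * x + v * y) \<rho>"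
        using DF_core[OF assms, of x y u v a b] xy uv ab unfolding F_def by auto
      note r(2)
      also have "F (u * x + v * y) \<rho> \<le> (SUP \<rho>\<in>{0..1}. F (u * x + v * y) \<rho>)"
        by (rule cSUP_upper[OF r(1) bdd])
      finally show "u * F x a + v * F y b \<le> (SUP \<rho>\<in>{0..1}. F (u * x + v * y) \<rho>)" .
    qed auto
    then show "u * R_DF S1 t x + v * R_DF S1 t y \<le> R_DF S1 t (u *\<^sub>R x + v *\<^sub>R y)"
      unfolding R by simp
  qed
qed

end
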